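(* Let $G$ be a finitely generated group with $\operatorname{Out}(G)$ finite. Then the automorphic growth function of $G$ is equivalent (under $\sim$) to its conjugacy growth function.
   Context: With respect to a finite generating set, the automorphic growth function sends $n$ to the number of $\operatorname{Aut}(G)$-orbits of $G$ containing an element of word length at most $n$, and the conjugacy growth function sends $n$ to the number of conjugacy classes containing an element of word length at most $n$. For non-decreasing non-zero $f,g\colon\mathbb{N}\to\mathbb{N}$, $f\preccurlyeq g$ means there is $\lambda\in\mathbb{N}\setminus\{0\}$ with $f(n)\le\lambda g(\lambda n+\lambda)+\lambda$ for all $n$, and $f\sim g$ means $f\preccurlyeq g$ and $g\preccurlyeq f$. *)

theory Defs
  imports "HOL-Algebra.Algebra"
begin

definition word_length :: "('a, 'b) monoid_scheme \<Rightarrow> 'a set \<Rightarrow> 'a \<Rightarrow> nat" where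
  "word_length G S g = (LEAST k. \<exists>w. length w = k \<and> set w \<subseteq> S \<union> (m_inv G ` S)
      \<and> foldr (\<lambda>a b. a \<otimes>\<^bsub>G\<^esub> b) w \<one>\<^bsub>G\<^esub> = g)"

definition ball_set :: "('a, 'b) monoid_scheme \<Rightarrow> 'a set \<Rightarrow> nat \<Rightarrow> 'a set" where
  "ball_set G S n = {x \<in> carrier G. word_length G S x \<le> n}"

definition conj_class :: "('a, 'b) monoid_scheme \<Rightarrow> 'a \<Rightarrow> 'a set" where
  "conj_class G x = {g \<otimes>\<^bsub>G\<^esub> x \<otimes>\<^bsub>G\<^esub> inv\<^bsub>G\<^esub> g | g. g \<in> carrier G}"

definition aut_orbit :: "('a, 'b) monoid_scheme \<Rightarrow> 'a \<Rightarrow> 'a set" where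
  "aut_orbit G x = {\<phi> x | \<phi>. \<phi> \<in> iso G G}"

definition conj_growth :: "('a, 'b) monoid_scheme \<Rightarrow> 'a set \<Rightarrow> nat \<Rightarrow> nat" where
  "conj_growth G S n = card (conj_class G ` ball_set G S n)"

definition aut_growth :: "('a, 'b) monoid_scheme \<Rightarrow> 'a set \<Rightarrow> nat \<Rightarrow> nat" where
  "aut_growth G S n = card (aut_orbit G ` ball_set G S n)"

definition out_rel :: "('a, 'b) monoid_scheme \<Rightarrow> (('a \<Rightarrow> 'a) \<times> ('a \<Rightarrow> 'a)) set" where
  "out_rel G = {(\<phi>, \<psi>). \<phi> \<in> iso G G \<and> \<psi> \<in> iso G G \<and>
      (\<exists>g \<in> carrier G. \<forall>x \<in> carrier G. \<phi> x = \<psi> (g \<otimes>\<^bsub>G\<^esub> x \<otimes>\<^bsub>G\<^esub> inv\<^bsub>G\<^esub> g))}"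

definition Out_finite :: "('a, 'b) monoid_scheme \<Rightarrow> bool" where
  "Out_finite G \<longleftrightarrow> finite (iso G G // out_rel G)"

definition growth_preceq :: "(nat \<Rightarrow> nat) \<Rightarrow> (nat \<Rightarrow> nat) \<Rightarrow> bool" where
  "growth_preceq f g \<longleftrightarrow> (\<exists>c::nat. c > 0 \<and> (\<forall>n. f n \<le> c * g (c * n + c) + c))"

definition growth_equiv :: "(nat \<Rightarrow> nat) \<Rightarrow> (nat \<Rightarrow> nat) \<Rightarrow> bool" where
  "growth_equiv f g \<longleftrightarrow> growth_preceq f g \<and> growth_preceq g f"

end

theory Submission
  imports Defs
begin

abbreviation wp :: "('a, 'b) monoid_scheme \<Rightarrow> 'a list \<Rightarrow> 'a" where
  "wp G w \<equiv> foldr (\<lambda>a b. a \<otimes>\<^bsub>G\<^esub> b) w \<one>\<^bsub>G\<^esub>"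

lemma (in group) wp_carrier: "set w \<subseteq> carrier G \<Longrightarrow> wp G w \<in> carrier G"
  by (induction w) auto

lemma (in group) wp_append:
  "set w1 \<subseteq> carrier G \<Longrightarrow> set w2 \<subseteq> carrier G \<Longrightarrow> wp G (w1 @ w2) = wp G w1 \<otimes> wp G w2"
  by (induction w1) (auto simp: wp_carrier m_assoc)

lemma (in group) gen_word:
  assumes "S \<subseteq> carrier G" "x \<in> generate G S"
  shows "\<exists>w. set w \<subseteq> S \<union> m_inv G ` S \<and> wp G w = x"
  using assms(2)
proof (induction rule: generate.induct)
  case one
  then show ?case by (intro exI[of _ "[]"]) auto
next
  case (incl h)
  then show ?case using assms(1) by (intro exI[of _ "[h]"]) auto
next
  case (inv h)
  then show ?case using assms(1) by (intro exI[of _ "[inv h]"]) auto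
next
  case (eng h1 h2)
  then obtain w1 w2 where w: "set w1 \<subseteq> S \<union> m_inv G ` S" "wp G w1 = h1"
    "set w2 \<subseteq> S \<union> m_inv G ` S" "wp G w2 = h2" by blast
  have c: "S \<union> m_inv G ` S \<subseteq> carrier G" using assms(1) by auto
  show ?case using w c wp_append[of w1 w2]
    by (intro exI[of _ "w1 @ w2"]) auto
qed

lemma (in group) ball_finite:
  assumes "finite S" "S \<subseteq> carrier G" "generate G S = carrier G"
  shows "finite (ball_set G S n)"
proof -
  let ?T = "S \<union> m_inv G ` S"
  have "ball_set G S n \<subseteq> wp G ` {w. set w \<subseteq> ?T \<and> length w \<le> n}"
  proof
    fix x assume x: "x \<in> ball_set G S n"
    then have xc: "x \<in> carrier G" and wl: "word_length G S x \<le> n"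
      by (auto simp: ball_set_def)
    from gen_word[OF assms(2)] xc assms(3) obtain w where
      "set w \<subseteq> ?T \<and> wp G w = x" by blast
    then have ex: "\<exists>k w. length w = k \<and> set w \<subseteq> ?T \<and> wp G w = x" by blast
    have "\<exists>w. length w = word_length G S x \<and> set w \<subseteq> ?T \<and> wp G w = x"
      unfolding word_length_def by (rule LeastI_ex[OF ex])
    then show "x \<in> wp G ` {w. set w \<subseteq> ?T \<and> length w \<le> n}" using wl by force
  qed
  moreover have "finite (wp G ` {w. set w \<subseteq> ?T \<and> length w \<le> n})"
    using assms(1) by (intro finite_imageI finite_lists_length_le) auto
  ultimately show ?thesis by (rule finite_subset)
qed

lemma ball_mono: "m \<le> n \<Longrightarrow> ball_set G S m \<subseteq> ball_set G S n"
  by (auto simp: ball_set_def)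

lemma (in group) canc1 [simp]: "x \<in> carrier G \<Longrightarrow> y \<in> carrier G \<Longrightarrow> inv x \<otimes> (x \<otimes> y) = y"
  by (simp add: m_assoc[symmetric])

lemma (in group) canc2 [simp]: "x \<in> carrier G \<Longrightarrow> y \<in> carrier G \<Longrightarrow> x \<otimes> (inv x \<otimes> y) = y"
  by (simp add: m_assoc[symmetric])

lemma (in group) conj_class_conj:
  assumes "h \<in> carrier G" "y \<in> carrier G"
  shows "conj_class G (h \<otimes> y \<otimes> inv h) = conj_class G y"
proof
  show "conj_class G (h \<otimes> y \<otimes> inv h) \<subseteq> conj_class G y"
  proof
    fix z assume "z \<in> conj_class G (h \<otimes> y \<otimes> inv h)"
    then obtain g where g: "g \<in> carrier G" "z = g \<otimes> (h \<otimes> y \<otimes> inv h) \<otimes> inv g"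
      by (auto simp: conj_class_def)
    then have "z = (g \<otimes> h) \<otimes> y \<otimes> inv (g \<otimes> h)"
      using assms by (simp add: m_assoc inv_mult_group)
    then show "z \<in> conj_class G y" using g assms unfolding conj_class_def by blast
  qed
next
  show "conj_class G y \<subseteq> conj_class G (h \<otimes> y \<otimes> inv h)"
  proof
    fix z assume "z \<in> conj_class G y"
    then obtain g where g: "g \<in> carrier G" "z = g \<otimes> y \<otimes> inv g"
      by (auto simp: conj_class_def)
    then have "z = (g \<otimes> inv h) \<otimes> (h \<otimes> y \<otimes> inv h) \<otimes> inv (g \<otimes> inv h)"
      using assms by (simp add: m_assoc inv_mult_group)
    then show "z \<in> conj_class G (h \<otimes> y \<otimes> inv h)" using g assms unfolding conj_class_def by blast
  qed
qed

lemma (in group) inner_iso: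
  assumes "g \<in> carrier G"
  shows "(\<lambda>x. g \<otimes> x \<otimes> inv g) \<in> iso G G"
proof -
  have hom: "(\<lambda>x. g \<otimes> x \<otimes> inv g) \<in> hom G G"
    unfolding hom_def using assms by (auto simp: m_assoc)
  have "bij_betw (\<lambda>x. g \<otimes> x \<otimes> inv g) (carrier G) (carrier G)"
    by (rule bij_betw_byWitness[where f'="\<lambda>x. inv g \<otimes> x \<otimes> g"])
      (use assms in \<open>auto simp: m_assoc\<close>)
  then show ?thesis using hom by (simp add: iso_def)
qed

lemma (in group) iso_conj:
  assumes "\<phi> \<in> iso G G" "g \<in> carrier G" "x \<in> carrier G"
  shows "\<phi> (g \<otimes> x \<otimes> inv g) = \<phi> g \<otimes> \<phi> x \<otimes> inv (\<phi> g)"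
proof -
  interpret gh: group_hom G G \<phi>
    using assms(1) by (simp add: group_hom_def group_hom_axioms_def iso_def is_group)
  show ?thesis using assms by simp
qed

lemma (in group) aut_orbit_iso:
  assumes "\<psi> \<in> iso G G" "y \<in> carrier G"
  shows "aut_orbit G (\<psi> y) = aut_orbit G y"
proof
  show "aut_orbit G (\<psi> y) \<subseteq> aut_orbit G y"
  proof
    fix z assume "z \<in> aut_orbit G (\<psi> y)"
    then obtain \<phi> where "\<phi> \<in> iso G G" "z = \<phi> (\<psi> y)" by (auto simp: aut_orbit_def)
    then have "\<phi> \<circ> \<psi> \<in> iso G G" "z = (\<phi> \<circ> \<psi>) y" using iso_set_trans[OF assms(1)] by auto
    then show "z \<in> aut_orbit G y" unfolding aut_orbit_def by blast
  qed
next
  have psi': "inv_into (carrier G) \<psi> \<in> iso G G" by (rule iso_set_sym[OF assms(1)])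
  have "inv_into (carrier G) \<psi> (\<psi> y) = y"
    using assms by (simp add: iso_def bij_betw_def)
  show "aut_orbit G y \<subseteq> aut_orbit G (\<psi> y)"
  proof
    fix z assume "z \<in> aut_orbit G y"
    then obtain \<phi> where "\<phi> \<in> iso G G" "z = \<phi> y" by (auto simp: aut_orbit_def)
    then have "\<phi> \<circ> inv_into (carrier G) \<psi> \<in> iso G G" "z = (\<phi> \<circ> inv_into (carrier G) \<psi>) (\<psi> y)"
      using iso_set_trans[OF psi'] \<open>inv_into (carrier G) \<psi> (\<psi> y) = y\<close> by auto
    then show "z \<in> aut_orbit G (\<psi> y)" unfolding aut_orbit_def by blast
  qed
qed

lemma (in group) aut_orbit_conj:
  assumes "y \<in> carrier G" "y' \<in> carrier G" "conj_class G y = conj_class G y'"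
  shows "aut_orbit G y = aut_orbit G y'"
proof -
  have "y' \<in> conj_class G y'" unfolding conj_class_def using assms
    by (intro CollectI exI[of _ \<one>]) auto
  then obtain g where g: "g \<in> carrier G" "y' = g \<otimes> y \<otimes> inv g"
    using assms(3) by (auto simp: conj_class_def)
  show ?thesis using aut_orbit_iso[OF inner_iso[OF g(1)] assms(1)] g by simp
qed


lemma (in group) self_in_orbit: "y \<in> carrier G \<Longrightarrow> y \<in> aut_orbit G y"
  using inner_iso[OF one_closed] unfolding aut_orbit_def
  by (intro CollectI exI[of _ "\<lambda>x. \<one> \<otimes> x \<otimes> inv \<one>"]) auto

lemma (in group) aut_le_conj:
  assumes "finite B" "B \<subseteq> carrier G"
  shows "card (aut_orbit G ` B) \<le> card (conj_class G ` B)"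
proof -
  let ?f = "\<lambda>C. aut_orbit G (SOME y. y \<in> B \<and> conj_class G y = C)"
  have "aut_orbit G ` B = ?f ` (conj_class G ` B)"
  proof (intro equalityI subsetI)
    fix Ob assume "Ob \<in> aut_orbit G ` B"
    then obtain y where y: "y \<in> B" "Ob = aut_orbit G y" by auto
    have "\<exists>z. z \<in> B \<and> conj_class G z = conj_class G y" using y by blast
    then have s: "(SOME z. z \<in> B \<and> conj_class G z = conj_class G y) \<in> B \<and>
      conj_class G (SOME z. z \<in> B \<and> conj_class G z = conj_class G y) = conj_class G y"
      by (rule someI_ex)
    then have "?f (conj_class G y) = Ob" using y assms(2) aut_orbit_conj by blast
    then show "Ob \<in> ?f ` (conj_class G ` B)" using y by blast
  next
    fix Ob assume "Ob \<in> ?f ` (conj_class G ` B)"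
    then obtain y where y: "y \<in> B" "Ob = ?f (conj_class G y)" by auto
    have "\<exists>z. z \<in> B \<and> conj_class G z = conj_class G y" using y by blast
    then have s: "(SOME z. z \<in> B \<and> conj_class G z = conj_class G y) \<in> B \<and>
      conj_class G (SOME z. z \<in> B \<and> conj_class G z = conj_class G y) = conj_class G y"
      by (rule someI_ex)
    then show "Ob \<in> aut_orbit G ` B" using y by auto
  qed
  then show ?thesis using assms by (simp add: card_image_le)
qed

lemma (in group) out_reps:
  assumes "Out_finite G"
  obtains R where "finite R" "R \<subseteq> iso G G"
    "\<And>\<psi>. \<psi> \<in> iso G G \<Longrightarrow> \<exists>\<phi>\<in>R. \<exists>g\<in>carrier G. \<forall>x\<in>carrier G. \<psi> x = \<phi> (g \<otimes> x \<otimes> inv g)"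
proof -
  define R where "R = (\<lambda>Q. SOME \<phi>. \<phi> \<in> Q) ` (iso G G // out_rel G)"
  have "finite R" using assms by (simp add: R_def Out_finite_def)
  moreover have "R \<subseteq> iso G G"
  proof
    fix \<phi> assume "\<phi> \<in> R"
    then obtain \<psi> where p: "\<psi> \<in> iso G G" "\<phi> = (SOME \<phi>. \<phi> \<in> out_rel G `` {\<psi>})"
      by (auto simp: R_def quotient_def)
    have "\<psi> \<in> out_rel G `` {\<psi>}" using p(1) unfolding out_rel_def
      by (auto intro!: bexI[of _ \<one>])
    then have "\<phi> \<in> out_rel G `` {\<psi>}" using p(2) by (metis someI)
    then show "\<phi> \<in> iso G G" by (auto simp: out_rel_def)
  qed
  moreover have "\<exists>\<phi>\<in>R. \<exists>g\<in>carrier G. \<forall>x\<in>carrier G. \<psi> x = \<phi> (g \<otimes> x \<otimes> inv g)"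
    if p: "\<psi> \<in> iso G G" for \<psi>
  proof -
    let ?\<phi> = "SOME \<phi>. \<phi> \<in> out_rel G `` {\<psi>}"
    have "out_rel G `` {\<psi>} \<in> iso G G // out_rel G" by (rule quotientI[OF p])
    then have "?\<phi> \<in> R" unfolding R_def by (rule imageI)
    have "\<psi> \<in> out_rel G `` {\<psi>}" using p(1) unfolding out_rel_def
      by (auto intro!: bexI[of _ \<one>])
    then have "?\<phi> \<in> out_rel G `` {\<psi>}" by (metis someI)
    then have "\<exists>g\<in>carrier G. \<forall>x\<in>carrier G. \<psi> x = ?\<phi> (g \<otimes> x \<otimes> inv g)"
      by (auto simp: out_rel_def)
    then show ?thesis using \<open>?\<phi> \<in> R\<close> by blast
  qed
  ultimately show ?thesis using that by blast
qed

lemma (in group) conj_le_aut: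
  assumes "finite B" "B \<subseteq> carrier G" "finite R" "R \<subseteq> iso G G"
    "\<And>\<psi>. \<psi> \<in> iso G G \<Longrightarrow> \<exists>\<phi>\<in>R. \<exists>g\<in>carrier G. \<forall>x\<in>carrier G. \<psi> x = \<phi> (g \<otimes> x \<otimes> inv g)"
  shows "card (conj_class G ` B) \<le> card (aut_orbit G ` B) * card R"
proof -
  define r where "r Ob = (SOME z. z \<in> B \<and> aut_orbit G z = Ob)" for Ob
  let ?h = "\<lambda>(Ob, \<phi>). conj_class G (\<phi> (r Ob))"
  have "conj_class G ` B \<subseteq> ?h ` (aut_orbit G ` B \<times> R)"
  proof
    fix C assume "C \<in> conj_class G ` B"
    then obtain y where y: "y \<in> B" "C = conj_class G y" by auto
    have yc: "y \<in> carrier G" using y assms(2) by auto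
    have "\<exists>z. z \<in> B \<and> aut_orbit G z = aut_orbit G y" using y by blast
    then have z: "r (aut_orbit G y) \<in> B \<and> aut_orbit G (r (aut_orbit G y)) = aut_orbit G y"
      unfolding r_def by (rule someI_ex)
    let ?z = "r (aut_orbit G y)"
    have zc: "?z \<in> carrier G" using z assms(2) by auto
    have "y \<in> aut_orbit G ?z" using z self_in_orbit[OF yc] by simp
    then obtain \<psi> where psi: "\<psi> \<in> iso G G" "y = \<psi> ?z" by (auto simp: aut_orbit_def)
    from assms(5)[OF psi(1)] obtain \<phi> g where pg: "\<phi> \<in> R" "g \<in> carrier G"
      "\<forall>x\<in>carrier G. \<psi> x = \<phi> (g \<otimes> x \<otimes> inv g)" by blast
    have phi: "\<phi> \<in> iso G G" using pg assms(4) by auto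
    have cc: "\<And>x. x \<in> carrier G \<Longrightarrow> \<phi> x \<in> carrier G"
      using phi by (auto simp: iso_def hom_def)
    have "y = \<phi> g \<otimes> \<phi> ?z \<otimes> inv (\<phi> g)"
      using psi pg zc iso_conj[OF phi pg(2) zc] by simp
    then have "C = conj_class G (\<phi> ?z)"
      using y conj_class_conj[OF cc[OF pg(2)] cc[OF zc]] by simp
    then show "C \<in> ?h ` (aut_orbit G ` B \<times> R)" using y pg
      by (intro image_eqI[of _ _ "(aut_orbit G y, \<phi>)"]) auto
  qed
  then have "card (conj_class G ` B) \<le> card (?h ` (aut_orbit G ` B \<times> R))"
    using assms by (intro card_mono) auto
  also have "\<dots> \<le> card (aut_orbit G ` B \<times> R)"
    using assms by (intro card_image_le) auto
  also have "\<dots> = card (aut_orbit G ` B) * card R" by (simp add: card_cartesian_product)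
  finally show ?thesis .
qed

theorem mainTheorem17:
  fixes G :: "('a, 'b) monoid_scheme" and S :: "'a set"
  assumes "group G"
    and "finite S" and "S \<subseteq> carrier G" and "generate G S = carrier G"
    and "Out_finite G"
  shows "growth_equiv (aut_growth G S) (conj_growth G S)"
proof -
  interpret group G by fact
  have fin: "\<And>n. finite (ball_set G S n)" using ball_finite assms by blast
  have bc: "\<And>n. ball_set G S n \<subseteq> carrier G" by (auto simp: ball_set_def)
  have cmono: "conj_growth G S m \<le> conj_growth G S n" if "m \<le> n" for m n
    unfolding conj_growth_def using fin ball_mono[of m n G S, OF that]
    by (intro card_mono image_mono) auto
  have amono: "aut_growth G S m \<le> aut_growth G S n" if "m \<le> n" for m n
    unfolding aut_growth_def using fin ball_mono[of m n G S, OF that]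
    by (intro card_mono image_mono) auto
  have p1: "growth_preceq (aut_growth G S) (conj_growth G S)"
    unfolding growth_preceq_def
  proof (intro exI[of _ 1] conjI allI)
    fix n
    have "aut_growth G S n \<le> conj_growth G S n"
      unfolding aut_growth_def conj_growth_def using aut_le_conj fin bc by blast
    also have "\<dots> \<le> conj_growth G S (1 * n + 1)" using cmono by simp
    finally show "aut_growth G S n \<le> 1 * conj_growth G S (1 * n + 1) + 1" by simp
  qed simp
  obtain R where R: "finite R" "R \<subseteq> iso G G"
    "\<And>\<psi>. \<psi> \<in> iso G G \<Longrightarrow> \<exists>\<phi>\<in>R. \<exists>g\<in>carrier G. \<forall>x\<in>carrier G. \<psi> x = \<phi> (g \<otimes>\<^bsub>G\<^esub> x \<otimes>\<^bsub>G\<^esub> inv\<^bsub>G\<^esub> g)"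
    using out_reps[OF assms(5)] by blast
  have p2: "growth_preceq (conj_growth G S) (aut_growth G S)"
    unfolding growth_preceq_def
  proof (intro exI[of _ "card R + 1"] conjI allI)
    fix n
    let ?c = "card R + 1"
    have "conj_growth G S n \<le> aut_growth G S n * card R"
      unfolding aut_growth_def conj_growth_def using conj_le_aut[OF fin bc R] by blast
    also have "\<dots> \<le> aut_growth G S (?c * n + ?c) * ?c"
      by (intro mult_mono amono) auto
    also have "\<dots> \<le> ?c * aut_growth G S (?c * n + ?c) + ?c" by simp
    finally show "conj_growth G S n \<le> ?c * aut_growth G S (?c * n + ?c) + ?c" .
  qed simp
  show ?thesis using p1 p2 by (simp add: growth_equiv_def)
qed

end
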